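(* Let $\pi,\tau\in S_n$ with $d(\pi,\tau)=t$, let $\lambda=\lambda(\pi)$, $\mu=\lambda(\tau)$ (parts padded with zeros), and let $B$ be a block of the union of their diagrams. Then the number of cells of $B$ is at most $t$.
   Context: Permutations are written in one-line notation. For $\pi\in S_n$, $\lambda(\pi)$ denotes the shape of the tableaux associated with $\pi$ by the RSK correspondence; Young diagrams are sets of cells, with $\lambda_j$ cells in row $j$. The distance $d(\pi,\tau)$ is the least number of adjacent transpositions $(k,k+1)$ whose successive left multiplication transforms $\pi$ into $\tau$. Blocks: a row index $j$ is a $\lambda$-row if $\lambda_j>\mu_j$ and a $\mu$-row if $\mu_j>\lambda_j$. A $\lambda$-block is the set of cells of the diagram of $\lambda$ not in the diagram of $\mu$ lying in the rows of a maximal interval $I$ of consecutive row indices containing at least one $\lambda$-row and no $\mu$-row (i.e. a maximal run of consecutive maximal intervals of $\lambda$-rows, not separated by any $\mu$-row); $\mu$-blocks are defined symmetrically. The blocks are the $\lambda$-blocks and the $\mu$-blocks; together they partition the symmetric difference of the two diagrams. *)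

theory Defs
  imports Main
begin

definition is_perm :: "nat \<Rightarrow> nat list \<Rightarrow> bool" where
  "is_perm n w \<longleftrightarrow> length w = n \<and> distinct w \<and> set w = {1..n}"

text \<open>Schensted row insertion into a tableau given as list of rows (top row first).\<close>
fun row_ins :: "nat \<Rightarrow> nat list list \<Rightarrow> nat list list" where
  "row_ins x [] = [[x]]"
| "row_ins x (r # rs) =
     (let a = takeWhile (\<lambda>y. y < x) r; b = dropWhile (\<lambda>y. y < x) r in
      if b = [] then (a @ [x]) # rs
      else (a @ x # tl b) # row_ins (hd b) rs)"

definition rsk_P :: "nat list \<Rightarrow> nat list list" where
  "rsk_P w = foldl (\<lambda>T x. row_ins x T) [] w"

text \<open>Shape lambda(pi), rows indexed from 0, padded with zeros.\<close>
definition rsk_shape :: "nat list \<Rightarrow> nat \<Rightarrow> nat" where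
  "rsk_shape w j = (let P = rsk_P w in if j < length P then length (P ! j) else 0)"

text \<open>Left multiplication by the adjacent transposition (k,k+1): swaps the values k and k+1.\<close>
definition left_adj :: "nat \<Rightarrow> nat list \<Rightarrow> nat list" where
  "left_adj k w = map (\<lambda>v. if v = k then k + 1 else if v = k + 1 then k else v) w"

definition adj_step :: "nat \<Rightarrow> nat list \<Rightarrow> nat list \<Rightarrow> bool" where
  "adj_step n p q \<longleftrightarrow> (\<exists>k. 1 \<le> k \<and> k < n \<and> q = left_adj k p)"

definition perm_dist :: "nat \<Rightarrow> nat list \<Rightarrow> nat list \<Rightarrow> nat" where
  "perm_dist n p q = (LEAST m. (adj_step n ^^ m) p q)"

definition diagram :: "(nat \<Rightarrow> nat) \<Rightarrow> (nat \<times> nat) set" where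
  "diagram lam = {(j, c). c < lam j}"

definition row_interval :: "nat set \<Rightarrow> bool" where
  "row_interval I \<longleftrightarrow> (\<forall>a\<in>I. \<forall>c\<in>I. \<forall>b. a \<le> b \<and> b \<le> c \<longrightarrow> b \<in> I)"

definition lam_block :: "(nat \<Rightarrow> nat) \<Rightarrow> (nat \<Rightarrow> nat) \<Rightarrow> (nat \<times> nat) set \<Rightarrow> bool" where
  "lam_block lam mu B \<longleftrightarrow>
     (\<exists>I. row_interval I \<and> (\<exists>j\<in>I. mu j < lam j) \<and> (\<forall>j\<in>I. \<not> lam j < mu j) \<and>
          (\<forall>J. row_interval J \<and> I \<subseteq> J \<and> (\<forall>j\<in>J. \<not> lam j < mu j) \<longrightarrow> J = I) \<and>
          B = {(j, c) \<in> diagram lam - diagram mu. j \<in> I})"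

definition is_block :: "(nat \<Rightarrow> nat) \<Rightarrow> (nat \<Rightarrow> nat) \<Rightarrow> (nat \<times> nat) set \<Rightarrow> bool" where
  "is_block lam mu B \<longleftrightarrow> lam_block lam mu B \<or> lam_block mu lam B"

end

theory Submission
  imports Defs
begin

definition fam :: "nat list \<Rightarrow> nat \<Rightarrow> nat set \<Rightarrow> (nat \<Rightarrow> nat) \<Rightarrow> bool" where
"fam w k S f \<longleftrightarrow> S \<subseteq> {..<length w} \<and> (\<forall>i\<in>S. f i < k) \<and> (\<forall>i\<in>S. \<forall>j\<in>S. i < j \<and> f i = f j \<longrightarrow> w!i < w!j)"

definition tr :: "nat \<Rightarrow> nat \<Rightarrow> nat" where
"tr i j = (if j = i then Suc i else if j = Suc i then i else j)"

lemma tr_tr[simp]: "tr i (tr i j) = j"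
  by (auto simp: tr_def)

lemma inj_tr: "inj (tr i)"
  by (metis injI tr_tr)

lemma fam_swap:
  assumes F: "fam w k S f" and L: "Suc i < length w" "length w' = length w"
    and N: "\<And>j. j < length w \<Longrightarrow> w'!j = w!(tr i j)"
    and C: "\<not> (i\<in>S \<and> Suc i \<in> S \<and> f i = f (Suc i))"
  shows "fam w' k (tr i ` S) (f \<circ> tr i)"
  unfolding fam_def
proof (intro conjI ballI impI)
  show "tr i ` S \<subseteq> {..<length w'}" using F L unfolding fam_def by (auto simp: tr_def)
next
  fix j assume "j \<in> tr i ` S" then show "(f \<circ> tr i) j < k" using F unfolding fam_def by auto
next
  fix a b assume a: "a \<in> tr i ` S" and b: "b \<in> tr i ` S" and ab: "a < b \<and> (f \<circ> tr i) a = (f \<circ> tr i) b"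
  have a': "tr i a \<in> S" using a by auto
  have b': "tr i b \<in> S" using b by auto
  have la: "a < length w" "b < length w" using a b F L unfolding fam_def by (auto simp: tr_def)
  have "tr i a < tr i b"
  proof (rule ccontr)
    assume "\<not> tr i a < tr i b"
    with ab have "a = i \<and> b = Suc i" by (auto simp: tr_def split: if_splits)
    with a' b' ab C show False by (auto simp: tr_def)
  qed
  then have "w ! tr i a < w ! tr i b" using F a' b' ab unfolding fam_def by auto
  then show "w' ! a < w' ! b" using N la by simp
qed

lemma card_tr: "card (tr i ` S) = card S"
  by (simp add: card_image inj_on_subset[OF inj_tr])

lemma norm1:
  assumes F: "fam w k S f" and L: "Suc (Suc i) < length w"
    and xy: "w!i < w!(Suc (Suc i))" and yz: "w!(Suc (Suc i)) < w!(Suc i)"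
  shows "\<exists>S' f'. fam w k S' f' \<and> card S' = card S \<and> \<not> (i\<in>S' \<and> Suc i \<in> S' \<and> f' i = f' (Suc i))"
proof (cases "i\<in>S \<and> Suc i \<in> S \<and> f i = f (Suc i)")
  case False then show ?thesis using F by blast
next
  case True
  define c1 where "c1 = f i"
  have Fs: "S \<subseteq> {..<length w}" "\<And>j. j\<in>S \<Longrightarrow> f j < k" "\<And>a b. a\<in>S \<Longrightarrow> b\<in>S \<Longrightarrow> a < b \<Longrightarrow> f a = f b \<Longrightarrow> w!a < w!b"
    using F unfolding fam_def by auto
  have fin: "finite S" using Fs(1) finite_subset by blast
  show ?thesis
  proof (cases "Suc (Suc i) \<in> S")
    case False
    define S' where "S' = insert (Suc (Suc i)) (S - {Suc i})"
    define f' where "f' = f(Suc (Suc i) := c1)"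
    have "card S' = card S" unfolding S'_def using False True fin
      by (simp add: card_Diff_singleton) (metis One_nat_def Suc_pred card_gt_0_iff empty_iff)
    moreover have "fam w k S' f'" unfolding fam_def
    proof (intro conjI ballI impI)
      show "S' \<subseteq> {..<length w}" using Fs(1) L by (auto simp: S'_def)
    next
      fix j assume "j \<in> S'" then show "f' j < k" using Fs(2) True by (auto simp: S'_def f'_def c1_def)
    next
      fix a b assume a: "a \<in> S'" and b: "b \<in> S'" and ab: "a < b \<and> f' a = f' b"
      show "w!a < w!b"
      proof (cases "a = Suc (Suc i)")
        case True
        then have "b \<in> S" "b \<noteq> Suc i" "f b = c1" "Suc i < b" using b ab by (auto simp: S'_def f'_def)
        then have "w!(Suc i) < w!b" using Fs(3) \<open>i\<in>S \<and> Suc i \<in> S \<and> f i = f (Suc i)\<close> c1_def by metis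
        then show ?thesis using True yz by simp
      next
        case aF: False
        show ?thesis
        proof (cases "b = Suc (Suc i)")
          case True
          then have "a \<in> S" "f a = c1" "a \<le> i" using a ab aF by (auto simp: S'_def f'_def)
          then have "w!a \<le> w!i" using Fs(3) \<open>i\<in>S \<and> Suc i \<in> S \<and> f i = f (Suc i)\<close> c1_def
            by (metis le_eq_less_or_eq less_imp_le)
          then show ?thesis using True xy by simp
        next
          case False
          then show ?thesis using a b ab aF Fs(3) by (auto simp: S'_def f'_def)
        qed
      qed
    qed
    moreover have "Suc i \<notin> S'" by (simp add: S'_def)
    ultimately show ?thesis by blast
  next
    case yin: True
    define c2 where "c2 = f (Suc (Suc i))"
    have "c1 \<noteq> c2"
    proof
      assume "c1 = c2"
      then have "w!(Suc i) < w!(Suc (Suc i))" using Fs(3) yin True c1_def c2_def by auto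
      then show False using yz by simp
    qed
    define g where "g = (\<lambda>c. if c = c1 then c2 else if c = c2 then c1 else c)"
    define f' where "f' = (\<lambda>j. if Suc i \<le> j then g (f j) else f j)"
    have g_inj: "g a = g b \<longleftrightarrow> a = b" for a b by (auto simp: g_def)
    have "fam w k S f'" unfolding fam_def
    proof (intro conjI ballI impI)
      show "S \<subseteq> {..<length w}" using Fs(1) .
    next
      fix j assume "j \<in> S" then show "f' j < k" using Fs(2) True yin
        by (auto simp: f'_def g_def c1_def c2_def)
    next
      fix a b assume a: "a \<in> S" and b: "b \<in> S" and ab: "a < b \<and> f' a = f' b"
      show "w!a < w!b"
      proof (cases "Suc i \<le> a \<or> b < Suc i")
        case True
        then have "f a = f b" using ab g_inj by (auto simp: f'_def)
        then show ?thesis using Fs(3) a b ab by blast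
      next
        case False
        then have ai: "a \<le> i" and bi: "Suc i \<le> b" by auto
        then have fe: "f a = g (f b)" using ab by (simp add: f'_def)
        show ?thesis
        proof (cases "f b = c1 \<or> f b = c2")
          case False
          then have "f a = f b" using fe by (auto simp: g_def)
          then show ?thesis using Fs(3) a b ab by blast
        next
          case True
          show ?thesis
          proof (cases "f b = c1")
            case bc1: True
            then have fa: "f a = c2" using fe by (simp add: g_def)
            have wa: "w!a < w!(Suc (Suc i))" using Fs(3)[OF a yin] fa ai c2_def by simp
            have "w!(Suc i) \<le> w!b"
            proof (cases "b = Suc i")
              case False
              then have "Suc i < b" using bi by simp
              then show ?thesis using Fs(3) \<open>i\<in>S \<and> Suc i \<in> S \<and> f i = f (Suc i)\<close> b bc1 c1_def
                by (metis less_imp_le)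
            qed simp
            then show ?thesis using wa yz by simp
          next
            case False
            then have bc2: "f b = c2" using True by simp
            then have fa: "f a = c1" using fe \<open>c1 \<noteq> c2\<close> by (simp add: g_def)
            have wa: "w!a \<le> w!i"
            proof (cases "a = i")
              case False
              then have "a < i" using ai by simp
              then show ?thesis using Fs(3) \<open>i\<in>S \<and> Suc i \<in> S \<and> f i = f (Suc i)\<close> a fa c1_def
                by (metis less_imp_le)
            qed simp
            have "b \<noteq> Suc i" using bc2 \<open>c1 \<noteq> c2\<close> \<open>i\<in>S \<and> Suc i \<in> S \<and> f i = f (Suc i)\<close> c1_def by auto
            then have "w!(Suc (Suc i)) \<le> w!b"
            proof (cases "b = Suc (Suc i)")
              case False
              then have "Suc (Suc i) < b" using bi \<open>b \<noteq> Suc i\<close> by simp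
              then show ?thesis using Fs(3) yin b bc2 c2_def by (metis less_imp_le)
            qed simp
            then show ?thesis using wa xy by simp
          qed
        qed
      qed
    qed
    moreover have "f' i \<noteq> f' (Suc i)" using \<open>c1 \<noteq> c2\<close> True
      by (simp add: f'_def g_def c1_def)
    ultimately show ?thesis by blast
  qed
qed

lemma norm2:
  assumes F: "fam w k S f" and L: "Suc (Suc i) < length w"
    and xy: "w!(Suc i) < w!i" and yz: "w!i < w!(Suc (Suc i))"
  shows "\<exists>S' f'. fam w k S' f' \<and> card S' = card S \<and> \<not> (Suc i\<in>S' \<and> Suc (Suc i) \<in> S' \<and> f' (Suc i) = f' (Suc (Suc i)))"
proof (cases "Suc i\<in>S \<and> Suc (Suc i) \<in> S \<and> f (Suc i) = f (Suc (Suc i))")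
  case False then show ?thesis using F by blast
next
  case True
  define c1 where "c1 = f (Suc i)"
  have Fs: "S \<subseteq> {..<length w}" "\<And>j. j\<in>S \<Longrightarrow> f j < k" "\<And>a b. a\<in>S \<Longrightarrow> b\<in>S \<Longrightarrow> a < b \<Longrightarrow> f a = f b \<Longrightarrow> w!a < w!b"
    using F unfolding fam_def by auto
  have fin: "finite S" using Fs(1) finite_subset by blast
  show ?thesis
  proof (cases "i \<in> S")
    case False
    define S' where "S' = insert i (S - {Suc i})"
    define f' where "f' = f(i := c1)"
    have "card S' = card S" unfolding S'_def using False True fin
      by (simp add: card_Diff_singleton) (metis One_nat_def Suc_pred card_gt_0_iff empty_iff)
    moreover have "fam w k S' f'" unfolding fam_def
    proof (intro conjI ballI impI)
      show "S' \<subseteq> {..<length w}" using Fs(1) L by (auto simp: S'_def)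
    next
      fix j assume "j \<in> S'" then show "f' j < k" using Fs(2) True by (auto simp: S'_def f'_def c1_def)
    next
      fix a b assume a: "a \<in> S'" and b: "b \<in> S'" and ab: "a < b \<and> f' a = f' b"
      show "w!a < w!b"
      proof (cases "a = i")
        case True
        then have "b \<in> S" "b \<noteq> Suc i" "f b = c1" "Suc (Suc i) \<le> b" using b ab by (auto simp: S'_def f'_def)
        then have "w!(Suc (Suc i)) \<le> w!b" using Fs(3) \<open>Suc i\<in>S \<and> Suc (Suc i) \<in> S \<and> f (Suc i) = f (Suc (Suc i))\<close> c1_def
          by (metis le_eq_less_or_eq less_imp_le)
        then show ?thesis using True yz by simp
      next
        case aF: False
        show ?thesis
        proof (cases "b = i")
          case True
          then have "a \<in> S" "f a = c1" "a < Suc i" using a ab aF by (auto simp: S'_def f'_def)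
          then have "w!a < w!(Suc i)" using Fs(3) \<open>Suc i\<in>S \<and> Suc (Suc i) \<in> S \<and> f (Suc i) = f (Suc (Suc i))\<close> c1_def
            by metis
          then show ?thesis using True xy by simp
        next
          case False
          then show ?thesis using a b ab aF Fs(3) by (auto simp: S'_def f'_def)
        qed
      qed
    qed
    moreover have "Suc i \<notin> S'" by (simp add: S'_def)
    ultimately show ?thesis by blast
  next
    case yin: True
    define c2 where "c2 = f i"
    have "c1 \<noteq> c2"
    proof
      assume "c1 = c2"
      then have "w!i < w!(Suc i)" using Fs(3) yin True c1_def c2_def by auto
      then show False using xy by simp
    qed
    define g where "g = (\<lambda>c. if c = c1 then c2 else if c = c2 then c1 else c)"
    define f' where "f' = (\<lambda>j. if Suc (Suc i) \<le> j then g (f j) else f j)"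
    have g_inj: "g a = g b \<longleftrightarrow> a = b" for a b by (auto simp: g_def)
    have "fam w k S f'" unfolding fam_def
    proof (intro conjI ballI impI)
      show "S \<subseteq> {..<length w}" using Fs(1) .
    next
      fix j assume "j \<in> S" then show "f' j < k" using Fs(2) True yin
        by (auto simp: f'_def g_def c1_def c2_def)
    next
      fix a b assume a: "a \<in> S" and b: "b \<in> S" and ab: "a < b \<and> f' a = f' b"
      show "w!a < w!b"
      proof (cases "Suc (Suc i) \<le> a \<or> b < Suc (Suc i)")
        case True
        then have "f a = f b" using ab g_inj by (auto simp: f'_def)
        then show ?thesis using Fs(3) a b ab by blast
      next
        case False
        then have ai: "a \<le> Suc i" and bi: "Suc (Suc i) \<le> b" by auto
        then have fe: "f a = g (f b)" using ab by (simp add: f'_def)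
        show ?thesis
        proof (cases "f b = c1 \<or> f b = c2")
          case False
          then have "f a = f b" using fe by (auto simp: g_def)
          then show ?thesis using Fs(3) a b ab by blast
        next
          case True
          show ?thesis
          proof (cases "f b = c1")
            case bc1: True
            then have fa: "f a = c2" using fe by (simp add: g_def)
            have "a \<noteq> Suc i" using fa \<open>c1 \<noteq> c2\<close> c1_def by auto
            have wa: "w!a \<le> w!i"
            proof (cases "a = i")
              case False
              then have "a < i" using ai \<open>a \<noteq> Suc i\<close> by simp
              then show ?thesis using Fs(3)[OF a yin] fa c2_def by simp
            qed simp
            have "w!(Suc (Suc i)) \<le> w!b"
            proof (cases "b = Suc (Suc i)")
              case False
              then have "Suc (Suc i) < b" using bi by simp
              then show ?thesis using Fs(3) \<open>Suc i\<in>S \<and> Suc (Suc i) \<in> S \<and> f (Suc i) = f (Suc (Suc i))\<close> b bc1 c1_def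
                by (metis less_imp_le)
            qed simp
            then show ?thesis using wa yz by simp
          next
            case False
            then have bc2: "f b = c2" using True by simp
            then have fa: "f a = c1" using fe \<open>c1 \<noteq> c2\<close> by (simp add: g_def)
            have wa: "w!a \<le> w!(Suc i)"
            proof (cases "a = Suc i")
              case False
              then have "a < Suc i" using ai by simp
              then show ?thesis using Fs(3) \<open>Suc i\<in>S \<and> Suc (Suc i) \<in> S \<and> f (Suc i) = f (Suc (Suc i))\<close> a fa c1_def
                by (metis less_imp_le)
            qed simp
            have "i < b" using bi by simp
            then have "w!i < w!b" using Fs(3)[OF yin b] bc2 c2_def by simp
            then show ?thesis using wa xy by simp
          qed
        qed
      qed
    qed
    moreover have "f' (Suc i) \<noteq> f' (Suc (Suc i))" using \<open>c1 \<noteq> c2\<close> True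
      by (simp add: f'_def g_def c1_def)
    ultimately show ?thesis by blast
  qed
qed

definition ach :: "nat list \<Rightarrow> nat \<Rightarrow> nat \<Rightarrow> bool" where
"ach w k m \<longleftrightarrow> (\<exists>S f. fam w k S f \<and> card S = m)"

definition knuth1 :: "nat list \<Rightarrow> nat list \<Rightarrow> bool" where
"knuth1 w w' \<longleftrightarrow> (\<exists>u v x y z. x < y \<and> y < z \<and>
   ((w = u@x#z#y#v \<and> w' = u@z#x#y#v) \<or> (w = u@y#x#z#v \<and> w' = u@y#z#x#v)))"

definition kequiv :: "nat list \<Rightarrow> nat list \<Rightarrow> bool" where
"kequiv = (\<lambda>a b. knuth1 a b \<or> knuth1 b a)\<^sup>*\<^sup>*"

lemma nth_swap2:
  assumes "j < length (u@a#b#v)"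
  shows "(u@b#a#v) ! j = (u@a#b#v) ! (tr (length u) j)"
proof -
  consider "j < length u" | "j = length u" | "j = Suc (length u)" | "Suc (length u) < j" by linarith
  then show ?thesis
  proof cases
    case 1 then show ?thesis by (simp add: tr_def nth_append)
  next
    case 2 then show ?thesis by (simp add: tr_def nth_append)
  next
    case 3 then show ?thesis by (simp add: tr_def nth_append)
  next
    case 4
    define d where "d = j - Suc (Suc (length u))"
    have d: "j = Suc (Suc (length u)) + d" using 4 by (simp add: d_def)
    then show ?thesis by (simp add: tr_def nth_append)
  qed
qed

lemma ach_swap:
  assumes F: "fam (u@p#q#v) k S f" and C: "\<not> (length u\<in>S \<and> Suc (length u) \<in> S \<and> f (length u) = f (Suc (length u)))"
  shows "ach (u@q#p#v) k (card S)"
proof -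
  have "fam (u@q#p#v) k (tr (length u) ` S) (f \<circ> tr (length u))"
  proof (rule fam_swap[OF F _ _ _ C])
    show "Suc (length u) < length (u@p#q#v)" by simp
    show "length (u@q#p#v) = length (u@p#q#v)" by simp
    fix j assume "j < length (u@p#q#v)"
    then show "(u@q#p#v) ! j = (u@p#q#v) ! tr (length u) j" by (rule nth_swap2)
  qed
  then show ?thesis unfolding ach_def using card_tr by blast
qed

lemma ach_dec:
  assumes F: "fam (u@p#q#v) k S f" and pq: "q < p"
  shows "ach (u@q#p#v) k (card S)"
proof (rule ach_swap[OF F])
  show "\<not> (length u\<in>S \<and> Suc (length u) \<in> S \<and> f (length u) = f (Suc (length u)))"
  proof
    assume a: "length u\<in>S \<and> Suc (length u) \<in> S \<and> f (length u) = f (Suc (length u))"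
    then have "(u@p#q#v)!(length u) < (u@p#q#v)!(Suc (length u))" using F unfolding fam_def by blast
    then show False using pq by (simp add: nth_append)
  qed
qed

lemma knuth1_ach:
  assumes K: "knuth1 w w'"
  shows "ach w k m \<longleftrightarrow> ach w' k m"
proof -
  obtain u v x y z where xyz: "x < y" "y < z" and
    cs: "(w = u@x#z#y#v \<and> w' = u@z#x#y#v) \<or> (w = u@y#x#z#v \<and> w' = u@y#z#x#v)"
    using K unfolding knuth1_def by blast
  from cs show ?thesis
  proof
    assume e: "w = u@x#z#y#v \<and> w' = u@z#x#y#v"
    show ?thesis
    proof
      assume "ach w k m"
      then obtain S f where F: "fam (u@x#z#y#v) k S f" and m: "card S = m" using e unfolding ach_def by auto
      obtain S' f' where F': "fam (u@x#z#y#v) k S' f'" "card S' = card S"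
        "\<not> (length u\<in>S' \<and> Suc (length u) \<in> S' \<and> f' (length u) = f' (Suc (length u)))"
      proof -
        have "Suc (Suc (length u)) < length (u@x#z#y#v)" by simp
        moreover have "(u@x#z#y#v)!(length u) < (u@x#z#y#v)!(Suc (Suc (length u)))"
          using xyz by (simp add: nth_append)
        moreover have "(u@x#z#y#v)!(Suc (Suc (length u))) < (u@x#z#y#v)!(Suc (length u))"
          using xyz by (simp add: nth_append)
        ultimately show ?thesis using norm1[OF F] that by blast
      qed
      show "ach w' k m" using ach_swap[OF F'(1) F'(3)] F'(2) m e by simp
    next
      assume "ach w' k m"
      then obtain S f where F: "fam (u@z#x#(y#v)) k S f" and m: "card S = m" using e unfolding ach_def by auto
      show "ach w k m" using ach_dec[OF F] xyz m e by simp
    qed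
  next
    assume e: "w = u@y#x#z#v \<and> w' = u@y#z#x#v"
    have e2: "w = (u@[y])@x#z#v" "w' = (u@[y])@z#x#v" using e by auto
    show ?thesis
    proof
      assume "ach w k m"
      then obtain S f where F: "fam (u@y#x#z#v) k S f" and m: "card S = m" using e unfolding ach_def by auto
      obtain S' f' where F': "fam (u@y#x#z#v) k S' f'" "card S' = card S"
        "\<not> (Suc (length u)\<in>S' \<and> Suc (Suc (length u)) \<in> S' \<and> f' (Suc (length u)) = f' (Suc (Suc (length u))))"
      proof -
        have "Suc (Suc (length u)) < length (u@y#x#z#v)" by simp
        moreover have "(u@y#x#z#v)!(Suc (length u)) < (u@y#x#z#v)!(length u)"
          using xyz by (simp add: nth_append)
        moreover have "(u@y#x#z#v)!(length u) < (u@y#x#z#v)!(Suc (Suc (length u)))"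
          using xyz by (simp add: nth_append)
        ultimately show ?thesis using norm2[OF F] that by blast
      qed
      have F'': "fam ((u@[y])@x#z#v) k S' f'" using F'(1) by simp
      show "ach w' k m" using ach_swap[OF F''] F'(2,3) m e2 by simp
    next
      assume "ach w' k m"
      then obtain S f where F: "fam ((u@[y])@z#x#v) k S f" and m: "card S = m" using e2 unfolding ach_def by auto
      show "ach w k m" using ach_dec[OF F] xyz m e2 by simp
    qed
  qed
qed

lemma kequiv_ach:
  assumes "kequiv w w'" shows "ach w k m \<longleftrightarrow> ach w' k m"
  using assms unfolding kequiv_def
proof (induction rule: rtranclp_induct)
  case base then show ?case by simp
next
  case (step b c) then show ?case using knuth1_ach by blast
qed

lemma kequiv_refl: "kequiv w w" unfolding kequiv_def by simp

lemma kequiv_trans: "kequiv a b \<Longrightarrow> kequiv b c \<Longrightarrow> kequiv a c"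
  unfolding kequiv_def by (rule rtranclp_trans)

lemma kequiv_sym: "kequiv a b \<Longrightarrow> kequiv b a"
  unfolding kequiv_def
proof (induction rule: rtranclp_induct)
  case base then show ?case by simp
next
  case (step b c)
  then have "(\<lambda>a b. knuth1 a b \<or> knuth1 b a)\<^sup>*\<^sup>* c b" by auto
  then show ?case using step by (meson rtranclp_trans)
qed

lemma knuth1_app: assumes "knuth1 w w'" shows "knuth1 (a@w@b) (a@w'@b)"
proof -
  obtain u v x y z where xyz: "x < y" "y < z" and
    cs: "(w = u@x#z#y#v \<and> w' = u@z#x#y#v) \<or> (w = u@y#x#z#v \<and> w' = u@y#z#x#v)"
    using assms unfolding knuth1_def by blast
  have "((a@w@b) = (a@u)@x#z#y#(v@b) \<and> (a@w'@b) = (a@u)@z#x#y#(v@b)) \<or>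
        ((a@w@b) = (a@u)@y#x#z#(v@b) \<and> (a@w'@b) = (a@u)@y#z#x#(v@b))" using cs by auto
  then show ?thesis unfolding knuth1_def using xyz by blast
qed

lemma kequiv_app: "kequiv w w' \<Longrightarrow> kequiv (a@w@b) (a@w'@b)"
  unfolding kequiv_def
proof (induction rule: rtranclp_induct)
  case base then show ?case by simp
next
  case (step x y)
  then have "knuth1 (a@x@b) (a@y@b) \<or> knuth1 (a@y@b) (a@x@b)" using knuth1_app by blast
  then have "(\<lambda>a b. knuth1 a b \<or> knuth1 b a) (a@x@b) (a@y@b)" by simp
  then show ?case by (rule rtranclp.rtrancl_into_rtrancl[OF step.IH])
qed

lemma kmove1: assumes "x < y" "y < z" shows "kequiv (u@x#z#y#v) (u@z#x#y#v)"
proof -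
  have "knuth1 (u@x#z#y#v) (u@z#x#y#v)" unfolding knuth1_def
    by (rule exI[of _ u], rule exI[of _ v], rule exI[of _ x], rule exI[of _ y], rule exI[of _ z]) (simp add: assms)
  then show ?thesis unfolding kequiv_def by (simp add: r_into_rtranclp)
qed

lemma kmove2: assumes "x < y" "y < z" shows "kequiv (u@y#z#x#v) (u@y#x#z#v)"
proof -
  have "knuth1 (u@y#x#z#v) (u@y#z#x#v)" unfolding knuth1_def
    by (rule exI[of _ u], rule exI[of _ v], rule exI[of _ x], rule exI[of _ y], rule exI[of _ z]) (simp add: assms)
  then show ?thesis unfolding kequiv_def by (simp add: r_into_rtranclp)
qed

lemmas [trans] = kequiv_trans

lemma kL1:
  assumes "sorted_wrt (<) (p#c)" "x < p"
  shows "kequiv (u @ p # c @ x # v) (u @ p # x # c @ v)"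
  using assms
proof (induction c arbitrary: v rule: rev_induct)
  case Nil then show ?case by (simp add: kequiv_refl)
next
  case (snoc e c')
  obtain pre q where pq: "p # c' = pre @ [q]" using rev_exhaust[of "p # c'"] by blast
  have pq2: "p # c' @ zs = pre @ q # zs" for zs
  proof -
    have "p # c' @ zs = (p # c') @ zs" by simp
    also have "... = pre @ q # zs" by (simp only: pq) simp
    finally show ?thesis .
  qed
  have qin: "q \<in> set (p # c')" using pq by simp
  have sc': "sorted_wrt (<) (p # c')" using snoc.prems(1) by (simp add: sorted_wrt_append)
  have xq: "x < q"
  proof (cases "q = p")
    case False
    then have "q \<in> set c'" using qin by simp
    then have "p < q" using sc' by simp
    then show ?thesis using snoc.prems(2) by simp
  qed (use snoc.prems(2) in simp)
  have qe: "q < e" using snoc.prems(1) qin by (auto simp: sorted_wrt_append)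
  have "u @ p # (c' @ [e]) @ x # v = (u @ pre) @ q # e # x # v" using pq2 by simp
  also have "kequiv ... ((u @ pre) @ q # x # e # v)" by (rule kmove2[OF xq qe])
  also have "(u @ pre) @ q # x # e # v = u @ p # c' @ x # (e # v)" using pq2 by simp
  also have "kequiv ... (u @ p # x # c' @ (e # v))" by (rule snoc.IH[OF sc' snoc.prems(2)])
  also have "... = u @ p # x # (c' @ [e]) @ v" by simp
  finally show ?case .
qed

lemma kL2:
  assumes "sorted_wrt (<) a" "\<forall>e\<in>set a. e < y" "y < b0"
  shows "kequiv (u @ a @ b0 # y # v) (u @ b0 # a @ y # v)"
  using assms
proof (induction a arbitrary: y v rule: rev_induct)
  case Nil then show ?case by (simp add: kequiv_refl)
next
  case (snoc e a')
  have ey: "e < y" using snoc.prems(2) by simp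
  have sa: "sorted_wrt (<) a'" using snoc.prems(1) by (simp add: sorted_wrt_append)
  have ae: "\<forall>e'\<in>set a'. e' < e" using snoc.prems(1) by (simp add: sorted_wrt_append)
  have "u @ (a' @ [e]) @ b0 # y # v = (u @ a') @ e # b0 # y # v" by simp
  also have "kequiv ... ((u @ a') @ b0 # e # y # v)"
    by (rule kmove1[OF ey snoc.prems(3)])
  also have "(u @ a') @ b0 # e # y # v = u @ a' @ b0 # e # (y # v)" by simp
  also have "kequiv ... (u @ b0 # a' @ e # (y # v))"
    by (rule snoc.IH[OF sa ae]) (use ey snoc.prems(3) in simp)
  also have "... = u @ b0 # (a' @ [e]) @ y # v" by simp
  finally show ?case .
qed

lemma krow:
  assumes s: "sorted_wrt (<) r" and x: "x \<notin> set r" and b: "dropWhile (\<lambda>y. y < x) r \<noteq> []"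
  shows "kequiv (r @ [x]) (hd (dropWhile (\<lambda>y. y < x) r) # (takeWhile (\<lambda>y. y < x) r @ x # tl (dropWhile (\<lambda>y. y < x) r)))"
proof -
  define a where "a = takeWhile (\<lambda>y. y < x) r"
  define b0 where "b0 = hd (dropWhile (\<lambda>y. y < x) r)"
  define c where "c = tl (dropWhile (\<lambda>y. y < x) r)"
  have r: "r = a @ b0 # c" using b by (simp add: a_def b0_def c_def)
  have ax: "\<forall>e\<in>set a. e < x" by (auto simp: a_def dest: set_takeWhileD)
  have "\<not> b0 < x" using b unfolding b0_def by (metis hd_dropWhile)
  moreover have "b0 \<noteq> x" using x r by auto
  ultimately have xb: "x < b0" by simp
  have sb: "sorted_wrt (<) (b0 # c)" and sa: "sorted_wrt (<) a" using s r by (auto simp: sorted_wrt_append)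
  have "kequiv (a @ b0 # c @ x # []) (a @ b0 # x # c @ [])" by (rule kL1[OF sb xb])
  moreover have "kequiv ([] @ a @ b0 # x # c) ([] @ b0 # a @ x # c)" by (rule kL2[OF sa ax xb])
  ultimately have "kequiv (r @ [x]) (b0 # a @ x # c)" using r by (simp add: kequiv_trans)
  then show ?thesis by (simp add: a_def b0_def c_def)
qed

lemma row_ins_nil:
  assumes "dropWhile (\<lambda>y. y < x) r = []"
  shows "row_ins x (r#rs) = (r @ [x]) # rs"
proof -
  have tw: "takeWhile (\<lambda>y. y < x) r = r" using takeWhile_dropWhile_id[of "\<lambda>y. y < x" r] assms by simp
  show ?thesis by (simp only: row_ins.simps Let_def assms tw) simp
qed

lemma row_ins_cons:
  assumes "dropWhile (\<lambda>y. y < x) r \<noteq> []"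
  shows "row_ins x (r#rs) = (takeWhile (\<lambda>y. y < x) r @ x # tl (dropWhile (\<lambda>y. y < x) r)) # row_ins (hd (dropWhile (\<lambda>y. y < x) r)) rs"
  using assms by (simp only: row_ins.simps Let_def if_False)

declare row_ins.simps(2)[simp del]

definition rw :: "nat list list \<Rightarrow> nat list" where
"rw T = concat (rev T)"

lemma ri_set: "set (concat (row_ins x T)) = insert x (set (concat T))"
proof (induction x T rule: row_ins.induct)
  case (1 x) then show ?case by simp
next
  case (2 x r rs)
  show ?case
  proof (cases "dropWhile (\<lambda>y. y < x) r = []")
    case True
    then show ?thesis by (simp only: row_ins_nil[OF True]) simp
  next
    case False
    have r: "r = takeWhile (\<lambda>y. y < x) r @ hd (dropWhile (\<lambda>y. y < x) r) # tl (dropWhile (\<lambda>y. y < x) r)"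
      using False by simp
    have "set r = set (takeWhile (\<lambda>y. y < x) r) \<union> insert (hd (dropWhile (\<lambda>y. y < x) r)) (set (tl (dropWhile (\<lambda>y. y < x) r)))"
      by (subst r) auto
    then show ?thesis using 2[OF refl refl False] by (auto simp: row_ins_cons[OF False])
  qed
qed

lemma ri_length: "length (concat (row_ins x T)) = Suc (length (concat T))"
proof (induction x T rule: row_ins.induct)
  case (1 x) then show ?case by simp
next
  case (2 x r rs)
  show ?case
  proof (cases "dropWhile (\<lambda>y. y < x) r = []")
    case True
    then show ?thesis by (simp only: row_ins_nil[OF True]) simp
  next
    case False
    have r: "length r = length (takeWhile (\<lambda>y. y < x) r) + Suc (length (tl (dropWhile (\<lambda>y. y < x) r)))"
      using False by (metis Suc_length_conv length_append list.collapse takeWhile_dropWhile_id)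
    show ?thesis using 2[OF refl refl False] r by (simp add: row_ins_cons[OF False])
  qed
qed

lemma ri_distinct:
  assumes "distinct (x # concat T)" shows "distinct (concat (row_ins x T))"
proof -
  have "card (insert x (set (concat T))) = Suc (length (concat T))"
    using assms distinct_card[of "concat T"] by simp
  then have "card (set (concat (row_ins x T))) = length (concat (row_ins x T))"
    by (simp only: ri_set ri_length)
  then show ?thesis by (simp add: card_distinct)
qed

lemma ri_sorted:
  assumes "\<forall>r\<in>set T. sorted_wrt (<) r" "distinct (x # concat T)"
  shows "\<forall>r\<in>set (row_ins x T). sorted_wrt (<) r"
  using assms
proof (induction x T rule: row_ins.induct)
  case (1 x) then show ?case by simp
next
  case (2 x r rs)
  have sr: "sorted_wrt (<) r" using 2 by simp
  have ax: "\<forall>e\<in>set (takeWhile (\<lambda>y. y < x) r). e < x" by (auto dest: set_takeWhileD)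
  show ?case
  proof (cases "dropWhile (\<lambda>y. y < x) r = []")
    case True
    then have "takeWhile (\<lambda>y. y < x) r = r" using takeWhile_dropWhile_id[of "\<lambda>y. y < x" r] by simp
    then have "sorted_wrt (<) (r @ [x])" using sr ax by (simp add: sorted_wrt_append)
    then show ?thesis using 2 by (simp only: row_ins_nil[OF True]) simp
  next
    case False
    define a where "a = takeWhile (\<lambda>y. y < x) r"
    define b0 where "b0 = hd (dropWhile (\<lambda>y. y < x) r)"
    define c where "c = tl (dropWhile (\<lambda>y. y < x) r)"
    have r: "r = a @ b0 # c" using False by (simp add: a_def b0_def c_def)
    have "\<not> b0 < x" using False unfolding b0_def by (metis hd_dropWhile)
    moreover have "b0 \<noteq> x" using 2(3) r by auto
    ultimately have xb: "x < b0" by simp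
    have "sorted_wrt (<) (a @ x # c)" using sr r ax xb unfolding a_def[symmetric]
      by (auto simp: sorted_wrt_append)
    moreover have "\<forall>r\<in>set (row_ins b0 rs). sorted_wrt (<) r"
    proof (rule 2(1)[OF refl refl False, folded b0_def])
      show "\<forall>r\<in>set rs. sorted_wrt (<) r" using 2(2) by simp
      show "distinct (b0 # concat rs)" using 2(3) r by auto
    qed
    ultimately show ?thesis by (simp add: row_ins_cons[OF False] a_def b0_def c_def)
  qed
qed

lemma ri_knuth:
  assumes "\<forall>r\<in>set T. sorted_wrt (<) r" "distinct (x # concat T)"
  shows "kequiv (rw T @ [x]) (rw (row_ins x T))"
  using assms
proof (induction x T rule: row_ins.induct)
  case (1 x) then show ?case by (simp add: rw_def kequiv_refl)
next
  case (2 x r rs)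
  have sr: "sorted_wrt (<) r" using 2 by simp
  show ?case
  proof (cases "dropWhile (\<lambda>y. y < x) r = []")
    case True
    then show ?thesis by (simp only: row_ins_nil[OF True]) (simp add: rw_def kequiv_refl)
  next
    case False
    define a where "a = takeWhile (\<lambda>y. y < x) r"
    define b0 where "b0 = hd (dropWhile (\<lambda>y. y < x) r)"
    define c where "c = tl (dropWhile (\<lambda>y. y < x) r)"
    have r: "r = a @ b0 # c" using False by (simp add: a_def b0_def c_def)
    have xr: "x \<notin> set r" using 2(3) by simp
    have IH: "kequiv (rw rs @ [b0]) (rw (row_ins b0 rs))"
    proof (rule 2(1)[OF refl refl False, folded b0_def])
      show "\<forall>r\<in>set rs. sorted_wrt (<) r" using 2(2) by simp
      show "distinct (b0 # concat rs)" using 2(3) r by auto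
    qed
    have K: "kequiv (r @ [x]) (b0 # (a @ x # c))"
      using krow[OF sr xr False] by (simp add: a_def b0_def c_def)
    have "rw (r # rs) @ [x] = rw rs @ (r @ [x]) @ []" by (simp add: rw_def)
    also have "kequiv ... (rw rs @ (b0 # (a @ x # c)) @ [])"
      by (rule kequiv_app[OF K])
    also have "rw rs @ (b0 # (a @ x # c)) @ [] = [] @ (rw rs @ [b0]) @ (a @ x # c)" by simp
    also have "kequiv ... ([] @ rw (row_ins b0 rs) @ (a @ x # c))"
      by (rule kequiv_app[OF IH])
    also have "[] @ rw (row_ins b0 rs) @ (a @ x # c) = rw (row_ins x (r # rs))"
      by (simp add: row_ins_cons[OF False] rw_def a_def b0_def c_def)
    finally show ?thesis .
  qed
qed

lemma rskP_props:
  assumes "distinct w"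
  shows "kequiv w (rw (rsk_P w)) \<and> (\<forall>r\<in>set (rsk_P w). sorted_wrt (<) r) \<and> set (concat (rsk_P w)) = set w
         \<and> distinct (concat (rsk_P w))"
  using assms
proof (induction w rule: rev_induct)
  case Nil then show ?case by (simp add: rsk_P_def rw_def kequiv_refl)
next
  case (snoc x w)
  have P: "rsk_P (w @ [x]) = row_ins x (rsk_P w)" by (simp add: rsk_P_def)
  have dw: "distinct w" and xw: "x \<notin> set w" using snoc.prems by auto
  note IH = snoc.IH[OF dw]
  have d: "distinct (x # concat (rsk_P w))" using IH xw by simp
  have "kequiv (w @ [x]) (rw (rsk_P w) @ [x])"
    using kequiv_app[OF conjunct1[OF IH], of "[]" "[x]"] by simp
  then have "kequiv (w @ [x]) (rw (rsk_P (w @ [x])))"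
    using kequiv_trans ri_knuth[OF conjunct1[OF conjunct2[OF IH]] d] unfolding P by blast
  moreover have "\<forall>r\<in>set (rsk_P (w @ [x])). sorted_wrt (<) r"
    using ri_sorted[OF conjunct1[OF conjunct2[OF IH]] d] P by simp
  moreover have "set (concat (rsk_P (w @ [x]))) = set (w @ [x])" using P IH ri_set by auto
  moreover have "distinct (concat (rsk_P (w @ [x])))" using P ri_distinct[OF d] by simp
  ultimately show ?case by blast
qed

lemma row_ins_alt:
  "row_ins x (r#rs) = (let m = length (takeWhile (\<lambda>y. y < x) r) in
     if m < length r then r[m := x] # row_ins (r!m) rs else (r @ [x]) # rs)"
proof -
  define m where "m = length (takeWhile (\<lambda>y. y < x) r)"
  have tw: "takeWhile (\<lambda>y. y < x) r = take m r" unfolding m_def by (rule takeWhile_eq_take)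
  have dw: "dropWhile (\<lambda>y. y < x) r = drop m r" unfolding m_def by (rule dropWhile_eq_drop)
  show ?thesis
  proof (cases "m < length r")
    case True
    then have ne: "dropWhile (\<lambda>y. y < x) r \<noteq> []" using dw by simp
    have "hd (drop m r) = r!m" using True by (simp add: hd_drop_conv_nth)
    moreover have "take m r @ x # tl (drop m r) = r[m := x]" using True
      by (simp add: upd_conv_take_nth_drop drop_Suc tl_drop)
    ultimately show ?thesis using True unfolding row_ins_cons[OF ne] tw dw by (simp add: m_def[symmetric])
  next
    case False
    then have ne: "dropWhile (\<lambda>y. y < x) r = []" using dw by simp
    show ?thesis using False unfolding row_ins_nil[OF ne] by (simp add: m_def[symmetric])
  qed
qed

lemma takeWhile_props:
  fixes r :: "nat list" and x :: nat
  defines "m \<equiv> length (takeWhile (\<lambda>y. y < x) r)"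
  shows "m \<le> length r" "\<And>i. i < m \<Longrightarrow> r!i < x" "m < length r \<Longrightarrow> \<not> r!m < x"
proof -
  show "m \<le> length r" unfolding m_def by (rule length_takeWhile_le)
  show "r!i < x" if "i < m" for i
  proof -
    have "takeWhile (\<lambda>y. y < x) r ! i = r ! i" using that unfolding m_def by (rule takeWhile_nth)
    moreover have "takeWhile (\<lambda>y. y < x) r ! i \<in> set (takeWhile (\<lambda>y. y < x) r)" using that unfolding m_def by simp
    ultimately show ?thesis by (metis set_takeWhileD)
  qed
  show "\<not> r!m < x" if "m < length r" using that unfolding m_def by (rule nth_length_takeWhile)
qed

definition tab :: "nat list list \<Rightarrow> bool" where
"tab T \<longleftrightarrow> (\<forall>r\<in>set T. sorted_wrt (<) r) \<and>
   (\<forall>j c. Suc j < length T \<longrightarrow> c < length (T!Suc j) \<longrightarrow> c < length (T!j) \<and> T!j!c < T!Suc j!c)"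

lemma tab_Cons:
  "tab (r # rs) \<longleftrightarrow> sorted_wrt (<) r \<and> tab rs \<and>
     (rs \<noteq> [] \<longrightarrow> (\<forall>c < length (hd rs). c < length r \<and> r!c < hd rs!c))"
proof -
  have "(\<forall>j c. Suc j < length (r#rs) \<longrightarrow> c < length ((r#rs)!Suc j) \<longrightarrow> c < length ((r#rs)!j) \<and> (r#rs)!j!c < (r#rs)!Suc j!c)
    \<longleftrightarrow> (rs \<noteq> [] \<longrightarrow> (\<forall>c < length (hd rs). c < length r \<and> r!c < hd rs!c)) \<and>
        (\<forall>j c. Suc j < length rs \<longrightarrow> c < length (rs!Suc j) \<longrightarrow> c < length (rs!j) \<and> rs!j!c < rs!Suc j!c)"
    (is "?L \<longleftrightarrow> ?R")
  proof
    assume L: ?L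
    have 1: "rs \<noteq> [] \<longrightarrow> (\<forall>c < length (hd rs). c < length r \<and> r!c < hd rs!c)"
      using L[rule_format, of 0] by (auto simp: hd_conv_nth)
    have 2: "\<forall>j c. Suc j < length rs \<longrightarrow> c < length (rs!Suc j) \<longrightarrow> c < length (rs!j) \<and> rs!j!c < rs!Suc j!c"
      using L[rule_format, of "Suc j" for j] by simp
    show ?R using 1 2 by blast
  next
    assume R: ?R
    show ?L
    proof (intro allI impI)
      fix j c assume a: "Suc j < length (r#rs)" "c < length ((r#rs)!Suc j)"
      show "c < length ((r#rs)!j) \<and> (r#rs)!j!c < (r#rs)!Suc j!c"
      proof (cases j)
        case 0
        then have "rs \<noteq> []" using a by auto
        then show ?thesis using R a 0 by (auto simp: hd_conv_nth)
      next
        case (Suc j')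
        then show ?thesis using R a by auto
      qed
    qed
  qed
  then show ?thesis unfolding tab_def by auto
qed

lemma ri_first:
  "row_ins x (r#rs) \<noteq> [] \<and> hd (row_ins x (r#rs)) =
     (let m = length (takeWhile (\<lambda>y. y < x) r) in if m < length r then r[m := x] else r @ [x])"
  by (simp add: row_ins_alt Let_def)

lemma ri_tab:
  assumes "tab T" "distinct (x # concat T)"
  shows "tab (row_ins x T)"
  using assms
proof (induction x T rule: row_ins.induct)
  case (1 x) then show ?case by (simp add: tab_def)
next
  case (2 x r rs)
  define m where "m = length (takeWhile (\<lambda>y. y < x) r)"
  have T: "sorted_wrt (<) r" "tab rs" "rs \<noteq> [] \<Longrightarrow> (\<forall>c < length (hd rs). c < length r \<and> r!c < hd rs!c)"
    using 2(2) unfolding tab_Cons by auto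
  have tp: "m \<le> length r" "\<And>i. i < m \<Longrightarrow> r!i < x" "m < length r \<Longrightarrow> \<not> r!m < x"
    using takeWhile_props[where r=r and x=x] by (auto simp: m_def)
  have xr: "x \<notin> set r" using 2(3) by simp
  have srows: "\<forall>r'\<in>set (row_ins x (r#rs)). sorted_wrt (<) r'"
    using ri_sorted 2(2,3) unfolding tab_def by blast
  show ?case
  proof (cases "m < length r")
    case False
    then have m: "m = length r" using tp by simp
    have ri: "row_ins x (r#rs) = (r @ [x]) # rs" using False by (simp add: row_ins_alt m_def[symmetric])
    have "sorted_wrt (<) (r @ [x])" using srows ri by simp
    moreover have "rs \<noteq> [] \<Longrightarrow> (\<forall>c < length (hd rs). c < length (r @ [x]) \<and> (r @ [x])!c < hd rs!c)"
      using T(3) by (auto simp: nth_append)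
    ultimately show ?thesis using T(2) unfolding ri tab_Cons by simp
  next
    case True
    define b0 where "b0 = r!m"
    have xb: "x < b0" using tp(3)[OF True] xr True unfolding b0_def
      by (metis linorder_neqE_nat nth_mem)
    have ri: "row_ins x (r#rs) = r[m := x] # row_ins b0 rs" using True
      by (simp add: row_ins_alt m_def[symmetric] b0_def)
    have "b0 \<in> set r" using True unfolding b0_def by simp
    have dd: "distinct (r @ concat rs)" using 2(3) by simp
    then have "b0 \<notin> set (concat rs)" "distinct (concat rs)" using \<open>b0 \<in> set r\<close>
      unfolding distinct_append by blast+
    then have d2: "distinct (b0 # concat rs)" by simp
    have IH: "tab (row_ins b0 rs)"
    proof -
      have dw: "dropWhile (\<lambda>y. y < x) r = drop m r" unfolding m_def by (rule dropWhile_eq_drop)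
      have ne: "dropWhile (\<lambda>y. y < x) r \<noteq> []" using dw True by simp
      have hb: "hd (dropWhile (\<lambda>y. y < x) r) = b0" unfolding dw b0_def using True by (simp add: hd_drop_conv_nth)
      show ?thesis using 2(1)[OF refl refl ne] hb T(2) d2 by simp
    qed
    have s1: "sorted_wrt (<) (r[m := x])" using srows ri by simp
    have col: "\<forall>c < length (hd (row_ins b0 rs)). c < length (r[m := x]) \<and> r[m := x]!c < hd (row_ins b0 rs)!c"
    proof (cases rs)
      case Nil
      then have "hd (row_ins b0 rs) = [b0]" by simp
      moreover have "r[m := x] ! 0 < b0"
      proof (cases "m = 0")
        case True then show ?thesis using xb \<open>m < length r\<close> by simp
      next
        case False
        then have "r ! 0 < x" using tp(2) by simp
        then show ?thesis using False xb by simp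
      qed
      moreover have "r \<noteq> []" using True by auto
      ultimately show ?thesis by simp
    next
      case (Cons s ss)
      define m' where "m' = length (takeWhile (\<lambda>y. y < b0) s)"
      have tp': "m' \<le> length s" "\<And>i. i < m' \<Longrightarrow> s!i < b0" "m' < length s \<Longrightarrow> \<not> s!m' < b0"
        using takeWhile_props[where r=s and x=b0] by (auto simp: m'_def)
      have colrs: "\<And>c. c < length s \<Longrightarrow> c < length r \<and> r!c < s!c" using T(3) Cons by auto
      have mm: "m' \<le> m"
      proof (rule ccontr)
        assume "\<not> m' \<le> m"
        then have "m < m'" by simp
        then have "s!m < b0" "m < length s" using tp' by auto
        moreover have "r!m < s!m" using colrs \<open>m < length s\<close> by simp
        ultimately show False unfolding b0_def by simp
      qed
      have hd': "hd (row_ins b0 rs) = (if m' < length s then s[m' := b0] else s @ [b0])"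
        using ri_first[of b0 s ss] Cons by (simp add: Let_def m'_def)
      show ?thesis
      proof (intro allI impI)
        fix c assume c: "c < length (hd (row_ins b0 rs))"
        show "c < length (r[m := x]) \<and> r[m := x]!c < hd (row_ins b0 rs)!c"
        proof (cases "c = m'")
          case True
          have v: "hd (row_ins b0 rs) ! c = b0" using hd' True tp'(1)
            by (auto simp: nth_append)
          have "r[m := x] ! c < b0"
          proof (cases "m' = m")
            case True then show ?thesis using \<open>c = m'\<close> \<open>m < length r\<close> xb by simp
          next
            case False
            then have "m' < m" using mm by simp
            then have "r!m' < x" using tp(2) by simp
            then show ?thesis using \<open>c = m'\<close> False xb by simp
          qed
          then show ?thesis using v True mm \<open>m < length r\<close> by simp
        next
          case False
          have cs: "c < length s" using c False hd' tp'(1) by (auto split: if_splits)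
          have v: "hd (row_ins b0 rs) ! c = s ! c" using hd' False cs by (auto simp: nth_append)
          have "r[m := x] ! c \<le> r ! c"
            using xb \<open>m < length r\<close> unfolding b0_def by (cases "c = m") (auto simp: nth_list_update)
          then show ?thesis using v colrs[OF cs] by simp
        qed
      qed
    qed
    have "row_ins b0 rs \<noteq> []" by (cases rs) (auto simp: row_ins_alt Let_def)
    then show ?thesis using s1 IH col unfolding ri tab_Cons by simp
  qed
qed

lemma rskP_tab: "distinct w \<Longrightarrow> tab (rsk_P w)"
proof (induction w rule: rev_induct)
  case Nil then show ?case by (simp add: rsk_P_def tab_def)
next
  case (snoc x w)
  have P: "rsk_P (w @ [x]) = row_ins x (rsk_P w)" by (simp add: rsk_P_def)
  have dw: "distinct w" and xw: "x \<notin> set w" using snoc.prems by auto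
  have "distinct (x # concat (rsk_P w))" using rskP_props[OF dw] xw by simp
  then show ?case using ri_tab snoc.IH[OF dw] P by simp
qed

definition lam :: "nat list list \<Rightarrow> nat \<Rightarrow> nat" where
"lam T k = sum_list (map length (take k T))"

lemma fam_empty: "fam w k {} f" by (simp add: fam_def)

lemma tab_lower:
  assumes "\<forall>r\<in>set T. sorted_wrt (<) r"
  shows "ach (rw T) k (lam T k)"
  using assms
proof (induction T arbitrary: k)
  case Nil then show ?case by (auto simp: ach_def lam_def rw_def intro!: exI[of _ "{}"] fam_empty)
next
  case (Cons r rs)
  show ?case
  proof (cases k)
    case 0 then show ?thesis by (auto simp: ach_def lam_def intro!: exI[of _ "{}"] fam_empty)
  next
    case (Suc k')
    obtain S f where F: "fam (rw rs) k' S f" and cS: "card S = lam rs k'"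
      using Cons.IH[of k'] Cons.prems unfolding ach_def by auto
    define n where "n = length (rw rs)"
    define S' where "S' = S \<union> {n..<n + length r}"
    define f' where "f' = (\<lambda>p. if p < n then f p else k')"
    have sr: "sorted_wrt (<) r" using Cons.prems by simp
    have Fs: "S \<subseteq> {..<n}" "\<And>p. p\<in>S \<Longrightarrow> f p < k'" "\<And>a b. a\<in>S \<Longrightarrow> b\<in>S \<Longrightarrow> a < b \<Longrightarrow> f a = f b \<Longrightarrow> rw rs!a < rw rs!b"
      using F unfolding fam_def n_def by auto
    have rw: "rw (r#rs) = rw rs @ r" by (simp add: rw_def)
    have "fam (rw (r#rs)) k S' f'" unfolding fam_def rw Suc
    proof (intro conjI ballI impI)
      show "S' \<subseteq> {..<length (rw rs @ r)}" using Fs(1) by (auto simp: S'_def n_def)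
    next
      fix p assume p: "p \<in> S'" show "f' p < Suc k'"
      proof (cases "p < n")
        case True then have "p \<in> S" using p by (auto simp: S'_def)
        then show ?thesis using Fs(2)[of p] True by (simp add: f'_def)
      qed (simp add: f'_def)
    next
      fix a b assume a: "a \<in> S'" and b: "b \<in> S'" and ab: "a < b \<and> f' a = f' b"
      show "(rw rs @ r)!a < (rw rs @ r)!b"
      proof (cases "b < n")
        case True
        then have "a < n" using ab by simp
        then have "a \<in> S" "b \<in> S" using a b True by (auto simp: S'_def)
        then have "rw rs!a < rw rs!b" using Fs(3) ab \<open>a < n\<close> True by (auto simp: f'_def)
        then show ?thesis using True \<open>a < n\<close> by (simp add: nth_append n_def)
      next
        case False
        show ?thesis
        proof (cases "a < n")
          case True
          then have "a \<in> S" using a by (auto simp: S'_def)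
          then have "f a < k'" using Fs(2) by simp
          then show ?thesis using ab True False by (simp add: f'_def)
        next
          case aF: False
          have "b < n + length r" using b False Fs(1) by (auto simp: S'_def)
          moreover have "a - n < b - n" using conjunct1[OF ab] aF by linarith
          ultimately have "r!(a-n) < r!(b-n)" using sorted_wrt_nth_less[OF sr, of "a-n" "b-n"] by simp
          then show ?thesis using aF False by (simp add: nth_append n_def)
        qed
      qed
    qed
    moreover have "card S' = lam (r#rs) k"
    proof -
      have fin: "finite S" using Fs(1) finite_subset by blast
      have "S \<inter> {n..<n + length r} = {}" using Fs(1) by auto
      then have "card S' = card S + length r" unfolding S'_def using fin by (simp add: card_Un_disjoint)
      then show ?thesis using cS Suc by (simp add: lam_def)
    qed
    ultimately show ?thesis unfolding ach_def by blast
  qed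
qed

lemma tab_col:
  assumes "tab T" "j < j'" "j' < length T" "c < length (T!j')"
  shows "c < length (T!j) \<and> T!j!c < T!j'!c"
  using assms(2-4)
proof (induction j')
  case 0 then show ?case by simp
next
  case (Suc j'')
  have 1: "c < length (T!j'') \<and> T!j''!c < T!Suc j''!c" using assms(1) Suc.prems unfolding tab_def by blast
  show ?case
  proof (cases "j = j''")
    case True then show ?thesis using 1 by simp
  next
    case False
    then have "j < j''" using Suc.prems by simp
    then show ?thesis using Suc.IH 1 Suc.prems by fastforce
  qed
qed

definition LL :: "nat list list \<Rightarrow> nat \<Rightarrow> nat" where
"LL T j = length (rw (drop j T))"

lemma len_rw: "length (rw X) = sum_list (map length X)"
  by (simp add: rw_def length_concat rev_map[symmetric] sum_list_rev)

lemma len_rw_drop: "length (rw (drop d X)) \<le> length (rw X)"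
proof -
  have "sum_list (map length X) = sum_list (map length (take d X)) + sum_list (map length (drop d X))"
    using sum_list_append[of "map length (take d X)" "map length (drop d X)"] by (simp flip: map_append)
  then show ?thesis by (simp add: len_rw)
qed

lemma LL_anti: "a \<le> b \<Longrightarrow> LL T b \<le> LL T a"
proof -
  assume "a \<le> b"
  then have "drop b T = drop (b - a) (drop a T)" by simp
  then show ?thesis unfolding LL_def using len_rw_drop[of "b - a" "drop a T"] by simp
qed

lemma LL_step: "j < length T \<Longrightarrow> LL T j = length (T!j) + LL T (Suc j)"
  unfolding LL_def rw_def by (simp add: Cons_nth_drop_Suc[symmetric])

lemma rw_split: "j < length T \<Longrightarrow> rw T = rw (drop (Suc j) T) @ T!j @ rw (take j T)"
proof -
  assume j: "j < length T"
  have "T = take j T @ T!j # drop (Suc j) T" using j by (simp add: id_take_nth_drop)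
  then have "rev T = rev (take j T @ T!j # drop (Suc j) T)" by (rule arg_cong)
  then have "rev T = rev (drop (Suc j) T) @ [T!j] @ rev (take j T)" by simp
  then show ?thesis unfolding rw_def by simp
qed

lemma rw_nth: "j < length T \<Longrightarrow> c < length (T!j) \<Longrightarrow> rw T ! (LL T (Suc j) + c) = T!j!c"
  using rw_split[of j T] by (simp add: nth_append LL_def)

lemma tab_upper:
  assumes tab: "tab T" and F: "fam (rw T) k S f"
  shows "card S \<le> lam T k"
proof -
  define pos where "pos = (\<lambda>(j::nat,c::nat). LL T (Suc j) + c)"
  define C where "C = Sigma {..<length T} (\<lambda>j. {..<length (T!j)})"
  define N where "N = length (rw T)"
  have Fs: "S \<subseteq> {..<N}" "\<And>p. p\<in>S \<Longrightarrow> f p < k" "\<And>a b. a\<in>S \<Longrightarrow> b\<in>S \<Longrightarrow> a < b \<Longrightarrow> f a = f b \<Longrightarrow> rw T!a < rw T!b"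
    using F unfolding fam_def N_def by auto
  have LL0: "LL T 0 = N" by (simp add: LL_def N_def)
  have posC: "pos jc < N" if "jc \<in> C" for jc
  proof -
    obtain j c where jc0: "jc = (j,c)" by (cases jc)
    then have jc: "jc = (j,c)" "j < length T" "c < length (T!j)" using that C_def by auto
    have "pos jc < LL T j" using LL_step[OF jc(2)] jc by (simp add: pos_def)
    also have "LL T j \<le> LL T 0" by (rule LL_anti) simp
    finally show ?thesis using LL0 by simp
  qed
  have posless: "pos (j',c') < pos (j,c)" if "j < j'" "j' < length T" "c' < length (T!j')" for j j' c c'
  proof -
    have "pos (j',c') < LL T j'" using LL_step[OF that(2)] that by (simp add: pos_def)
    also have "LL T j' \<le> LL T (Suc j)" by (rule LL_anti) (use that in simp)
    finally show ?thesis by (simp add: pos_def)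
  qed
  have injC: "inj_on pos C"
  proof (rule inj_onI)
    fix x y assume x: "x \<in> C" and y: "y \<in> C" and e: "pos x = pos y"
    obtain j c where jc0: "x = (j,c)" by (cases x)
    then have jc: "x = (j,c)" "j < length T" "c < length (T!j)" using x C_def by auto
    obtain j' c' where jc0': "y = (j',c')" by (cases y)
    then have jc': "y = (j',c')" "j' < length T" "c' < length (T!j')" using y C_def by auto
    have "j = j'"
    proof (rule ccontr)
      assume "j \<noteq> j'"
      then have "j < j' \<or> j' < j" by auto
      then show False
      proof
        assume "j < j'" then have "pos (j',c') < pos (j,c)" using posless jc' by blast
        then show False using e jc jc' by simp
      next
        assume "j' < j" then have "pos (j,c) < pos (j',c')" using posless jc by blast
        then show False using e jc jc' by simp
      qed
    qed
    then show "x = y" using e jc jc' by (simp add: pos_def)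
  qed
  have cardC: "card C = N"
  proof -
    have "card C = (\<Sum>j<length T. length (T!j))" unfolding C_def by (simp add: card_SigmaI)
    also have "... = sum_list (map length T)" by (simp add: sum_list_sum_nth atLeast0LessThan)
    also have "... = N" unfolding N_def by (simp add: len_rw)
    finally show ?thesis .
  qed
  have finC: "finite C" unfolding C_def by simp
  have imC: "pos ` C = {..<N}"
  proof (rule card_seteq)
    show "finite {..<N}" by simp
    show "pos ` C \<subseteq> {..<N}" using posC by auto
    show "card {..<N} \<le> card (pos ` C)" using card_image[OF injC] cardC by simp
  qed
  define SC where "SC = {jc \<in> C. pos jc \<in> S}"
  have cSC: "card SC = card S"
  proof -
    have "pos ` SC = S" using imC Fs(1) unfolding SC_def by auto
    moreover have "inj_on pos SC" using injC unfolding SC_def by (rule inj_on_subset) auto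
    ultimately show ?thesis using card_image by fastforce
  qed
  define A where "A = (\<lambda>c. {j. (j,c) \<in> SC})"
  define B where "B = (\<lambda>c. {j. (j,c) \<in> C \<and> j < k})"
  have AB: "card (A c) \<le> card (B c)" for c
  proof -
    have finA: "finite (A c)" unfolding A_def SC_def C_def by (rule finite_subset[of _ "{..<length T}"]) auto
    have Ak: "card (A c) \<le> k"
    proof -
      have "inj_on (\<lambda>j. f (pos (j,c))) (A c)"
      proof (rule inj_onI)
        fix j j' assume j: "j \<in> A c" and j': "j' \<in> A c" and e: "f (pos (j,c)) = f (pos (j',c))"
        show "j = j'"
        proof (rule ccontr)
          assume ne: "j \<noteq> j'"
          have key: False if "a \<in> A c" "b \<in> A c" "a < b" "f (pos (a,c)) = f (pos (b,c))" for a b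
          proof -
            have a: "(a,c) \<in> C" "pos (a,c) \<in> S" and b: "(b,c) \<in> C" "pos (b,c) \<in> S"
              using that unfolding A_def SC_def by auto
            have bl: "b < length T" "c < length (T!b)" using b C_def by auto
            have al: "a < length T" "c < length (T!a)" using a C_def by auto
            have "pos (b,c) < pos (a,c)" using posless[OF that(3) bl] .
            then have "rw T ! pos (b,c) < rw T ! pos (a,c)" using Fs(3)[OF b(2) a(2)] that(4) by simp
            then have "T!b!c < T!a!c" using rw_nth al bl by (simp add: pos_def)
            moreover have "T!a!c < T!b!c" using tab_col[OF tab that(3) bl] by simp
            ultimately show False by simp
          qed
          from ne have "j < j' \<or> j' < j" by auto
          then show False
          proof
            assume "j < j'" then show False using key[OF j j'] e by blast
          next
            assume "j' < j" then show False using key[OF j' j] e by simp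
          qed
        qed
      qed
      moreover have "(\<lambda>j. f (pos (j,c))) ` A c \<subseteq> {..<k}" using Fs(2) unfolding A_def SC_def by auto
      ultimately show ?thesis using card_inj_on_le[of _ "A c" "{..<k}"] by fastforce
    qed
    define D where "D = {j. (j,c) \<in> C}"
    have AD: "A c \<subseteq> D" unfolding A_def SC_def D_def by auto
    have finD: "finite D" unfolding D_def C_def by (rule finite_subset[of _ "{..<length T}"]) auto
    have down: "j \<in> D" if "j' \<in> D" "j < j'" for j j'
      using that tab_col[OF tab, of j j' c] unfolding D_def C_def by auto
    show ?thesis
    proof (cases "D \<subseteq> {..<k}")
      case True
      then have "B c = D" unfolding B_def D_def by auto
      then show ?thesis using AD finD by (simp add: card_mono)
    next
      case False
      then obtain j0 where "j0 \<in> D" "\<not> j0 < k" by blast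
      then have "k \<le> j0" by simp
      then have "{..<k} \<subseteq> D" using down \<open>j0 \<in> D\<close> by fastforce
      then have "B c = {..<k}" unfolding B_def D_def by auto
      then show ?thesis using Ak by simp
    qed
  qed
  have Cbound: "c < N" if "(j,c) \<in> C" for j c
  proof -
    have "pos (j,c) < N" using posC[OF that] .
    then show ?thesis by (simp add: pos_def)
  qed
  have sw1: "SC = (\<lambda>(c,j). (j,c)) ` (Sigma {..<N} A)"
    unfolding A_def SC_def using Cbound by (auto simp: image_iff)
  have sw2: "{jc \<in> C. fst jc < k} = (\<lambda>(c,j). (j,c)) ` (Sigma {..<N} B)"
    unfolding B_def using Cbound by (auto simp: image_iff)
  have injsw: "inj_on (\<lambda>(c::nat,j::nat). (j,c)) X" for X by (auto simp: inj_on_def)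
  have finA: "finite (A c)" for c unfolding A_def SC_def C_def by (rule finite_subset[of _ "{..<length T}"]) auto
  have finB: "finite (B c)" for c unfolding B_def C_def by (rule finite_subset[of _ "{..<length T}"]) auto
  have "card S = card (Sigma {..<N} A)" using cSC unfolding sw1 card_image[OF injsw] by simp
  also have "... = (\<Sum>c<N. card (A c))" using finA by (simp add: card_SigmaI)
  also have "... \<le> (\<Sum>c<N. card (B c))" using AB by (rule sum_mono)
  also have "... = card (Sigma {..<N} B)" using finB by (simp add: card_SigmaI)
  also have "... = card {jc \<in> C. fst jc < k}" unfolding sw2 card_image[OF injsw] by simp
  also have "{jc \<in> C. fst jc < k} = Sigma {..<min k (length T)} (\<lambda>j. {..<length (T!j)})"
    unfolding C_def by auto
  also have "card ... = (\<Sum>j<min k (length T). length (T!j))" by (simp add: card_SigmaI)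
  also have "... = lam T k"
  proof -
    have "lam T k = (\<Sum>j<length (take k T). length (take k T ! j))"
      unfolding lam_def by (simp add: sum_list_sum_nth atLeast0LessThan)
    also have "... = (\<Sum>j<min k (length T). length (T!j))" by (simp add: min.commute)
    finally show ?thesis by simp
  qed
  finally show ?thesis .
qed

definition Lam :: "nat list \<Rightarrow> nat \<Rightarrow> nat" where
"Lam w k = lam (rsk_P w) k"

lemma greene_ach: "distinct w \<Longrightarrow> ach w k (Lam w k)"
proof -
  assume d: "distinct w"
  note P = rskP_props[OF d]
  have "ach (rw (rsk_P w)) k (lam (rsk_P w) k)" using tab_lower P by blast
  then show ?thesis using kequiv_ach[of w "rw (rsk_P w)"] P unfolding Lam_def by blast
qed

lemma greene_upper: "distinct w \<Longrightarrow> fam w k S f \<Longrightarrow> card S \<le> Lam w k"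
proof -
  assume d: "distinct w" and F: "fam w k S f"
  note P = rskP_props[OF d]
  have "ach w k (card S)" using F unfolding ach_def by blast
  then have "ach (rw (rsk_P w)) k (card S)" using kequiv_ach[of w "rw (rsk_P w)"] P by blast
  then obtain S' f' where "fam (rw (rsk_P w)) k S' f'" "card S' = card S" unfolding ach_def by blast
  then show ?thesis using tab_upper[OF rskP_tab[OF d]] unfolding Lam_def by metis
qed

lemma fam_subset: "fam w k S f \<Longrightarrow> S' \<subseteq> S \<Longrightarrow> fam w k S' f"
  unfolding fam_def by blast

lemma left_adj_invol: "left_adj v (left_adj v w) = w"
  by (induct w) (auto simp: left_adj_def)

lemma left_adj_nth: "i < length w \<Longrightarrow> left_adj v w ! i = (if w!i = v then Suc v else if w!i = Suc v then v else w!i)"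
  by (simp add: left_adj_def)

lemma left_adj_len[simp]: "length (left_adj v w) = length w"
  by (simp add: left_adj_def)

lemma distinct_left_adj: "distinct w \<Longrightarrow> distinct (left_adj v w)"
  unfolding left_adj_def distinct_map by (auto simp: inj_on_def)

lemma fam_valswap:
  assumes F: "fam u k S f"
    and C: "\<not> (\<exists>i\<in>S. \<exists>j\<in>S. i < j \<and> f i = f j \<and> u!i = v \<and> u!j = Suc v)"
  shows "fam (left_adj v u) k S f"
  unfolding fam_def
proof (intro conjI ballI impI)
  show "S \<subseteq> {..<length (left_adj v u)}" using F unfolding fam_def by simp
next
  fix i assume "i \<in> S" then show "f i < k" using F unfolding fam_def by simp
next
  fix i j assume i: "i \<in> S" and j: "j \<in> S" and ij: "i < j \<and> f i = f j"
  have lt: "u!i < u!j" using F i j ij unfolding fam_def by blast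
  have nb: "\<not> (u!i = v \<and> u!j = Suc v)" using C i j ij by blast
  have l: "i < length u" "j < length u" using F i j unfolding fam_def by auto
  show "left_adj v u ! i < left_adj v u ! j"
    using lt nb l by (auto simp: left_adj_nth)
qed

lemma T1:
  assumes d: "distinct u" and nb: "\<not> (\<exists>i j. i < j \<and> j < length u \<and> u!i = v \<and> u!j = Suc v)"
  shows "Lam u k \<le> Lam (left_adj v u) k"
proof -
  obtain S f where F: "fam u k S f" and c: "card S = Lam u k" using greene_ach[OF d] unfolding ach_def by blast
  have "\<not> (\<exists>i\<in>S. \<exists>j\<in>S. i < j \<and> f i = f j \<and> u!i = v \<and> u!j = Suc v)"
    using nb F unfolding fam_def by blast
  then have "fam (left_adj v u) k S f" by (rule fam_valswap[OF F])
  then show ?thesis using greene_upper[OF distinct_left_adj[OF d]] c by metis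
qed

lemma T2:
  assumes d: "distinct u"
  shows "Lam u k \<le> Lam (left_adj v u) k + 1"
proof -
  obtain S f where F: "fam u k S f" and c: "card S = Lam u k" using greene_ach[OF d] unfolding ach_def by blast
  have fin: "finite S" using F unfolding fam_def using finite_subset by blast
  show ?thesis
  proof (cases "\<exists>i\<in>S. \<exists>j\<in>S. i < j \<and> f i = f j \<and> u!i = v \<and> u!j = Suc v")
    case False
    then have "fam (left_adj v u) k S f" by (rule fam_valswap[OF F])
    then have "card S \<le> Lam (left_adj v u) k" using greene_upper[OF distinct_left_adj[OF d]] by metis
    then show ?thesis using c by simp
  next
    case True
    then obtain i j where ij: "i \<in> S" "j \<in> S" "i < j" "u!j = Suc v" by blast
    have F': "fam u k (S - {j}) f" using fam_subset[OF F] by blast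
    have jl: "j < length u" using F ij unfolding fam_def by auto
    have "\<not> (\<exists>i\<in>S - {j}. \<exists>j'\<in>S - {j}. i < j' \<and> f i = f j' \<and> u!i = v \<and> u!j' = Suc v)"
    proof
      assume "\<exists>i\<in>S - {j}. \<exists>j'\<in>S - {j}. i < j' \<and> f i = f j' \<and> u!i = v \<and> u!j' = Suc v"
      then obtain j' where j': "j' \<in> S" "j' \<noteq> j" "u!j' = Suc v" by blast
      have "j' < length u" using F j' unfolding fam_def by auto
      then show False using j' ij jl d nth_eq_iff_index_eq by metis
    qed
    then have "fam (left_adj v u) k (S - {j}) f" by (rule fam_valswap[OF F'])
    then have "card (S - {j}) \<le> Lam (left_adj v u) k" using greene_upper[OF distinct_left_adj[OF d]] by metis
    then show ?thesis using c ij(2) fin by (simp add: card_Diff_singleton)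
  qed
qed

lemma step_Lam:
  assumes d: "distinct w"
  shows "(\<forall>k. Lam (left_adj v w) k \<le> Lam w k \<and> Lam w k \<le> Lam (left_adj v w) k + 1) \<or>
         (\<forall>k. Lam w k \<le> Lam (left_adj v w) k \<and> Lam (left_adj v w) k \<le> Lam w k + 1)"
proof (cases "\<exists>i j. i < j \<and> j < length w \<and> w!i = v \<and> w!j = Suc v")
  case True
  then obtain i j where ij: "i < j" "j < length w" "w!i = v" "w!j = Suc v" by blast
  define w' where "w' = left_adj v w"
  have d': "distinct w'" unfolding w'_def by (rule distinct_left_adj[OF d])
  have nb: "\<not> (\<exists>i' j'. i' < j' \<and> j' < length w' \<and> w'!i' = v \<and> w'!j' = Suc v)"
  proof
    assume "\<exists>i' j'. i' < j' \<and> j' < length w' \<and> w'!i' = v \<and> w'!j' = Suc v"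
    then obtain i' j' where p: "i' < j'" "j' < length w'" "w'!i' = v" "w'!j' = Suc v" by blast
    have l: "i' < length w" "j' < length w" using p by (auto simp: w'_def)
    have "w!i' = Suc v" using p(3) l by (auto simp: w'_def left_adj_nth split: if_splits)
    then have "i' = j" using ij l d nth_eq_iff_index_eq by metis
    have "w!j' = v" using p(4) l by (auto simp: w'_def left_adj_nth split: if_splits)
    then have "j' = i" using ij l d nth_eq_iff_index_eq by (metis less_trans)
    then show False using \<open>i' = j\<close> p(1) ij(1) by simp
  qed
  have "Lam w' k \<le> Lam w k" for k using T1[OF d' nb, of k] left_adj_invol unfolding w'_def by metis
  moreover have "Lam w k \<le> Lam w' k + 1" for k using T2[OF d] unfolding w'_def by simp
  ultimately show ?thesis unfolding w'_def by blast
next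
  case False
  define w' where "w' = left_adj v w"
  have d': "distinct w'" unfolding w'_def by (rule distinct_left_adj[OF d])
  have "Lam w k \<le> Lam w' k" for k using T1[OF d False] unfolding w'_def by simp
  moreover have "Lam w' k \<le> Lam w k + 1" for k using T2[OF d', of k] left_adj_invol unfolding w'_def by metis
  ultimately show ?thesis unfolding w'_def by blast
qed

lemma sum_split_int:
  fixes f :: "nat \<Rightarrow> nat"
  assumes "a \<le> b"
  shows "int (\<Sum>j\<in>{a..<b}. f j) = int (\<Sum>j<b. f j) - int (\<Sum>j<a. f j)"
proof -
  have "(\<Sum>j\<in>{0..<a}. f j) + (\<Sum>j\<in>{a..<b}. f j) = (\<Sum>j\<in>{0..<b}. f j)"
    by (rule sum.atLeastLessThan_concat) (use assms in auto)
  then have "(\<Sum>j<b. f j) = (\<Sum>j<a. f j) + (\<Sum>j\<in>{a..<b}. f j)"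
    by (simp add: atLeast0LessThan)
  then show ?thesis by simp
qed

lemma block_card:
  fixes lf mf :: "nat \<Rightarrow> nat"
  assumes ab: "a \<le> b" and ge: "\<forall>j\<in>{a..<b}. mf j \<le> lf j"
  shows "int (card {(j, c) \<in> diagram lf - diagram mf. j \<in> {a..<b}}) =
         (int (\<Sum>j<b. lf j) - int (\<Sum>j<a. lf j)) - (int (\<Sum>j<b. mf j) - int (\<Sum>j<a. mf j))"
proof -
  have eq: "{(j, c) \<in> diagram lf - diagram mf. j \<in> {a..<b}} = Sigma {a..<b} (\<lambda>j. {mf j..<lf j})"
    unfolding diagram_def by auto
  have "card (Sigma {a..<b} (\<lambda>j. {mf j..<lf j})) = (\<Sum>j\<in>{a..<b}. lf j - mf j)"
    by (simp add: card_SigmaI)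
  then have "int (card {(j, c) \<in> diagram lf - diagram mf. j \<in> {a..<b}}) = (\<Sum>j\<in>{a..<b}. int (lf j) - int (mf j))"
    using ge unfolding eq by (simp add: of_nat_diff)
  also have "... = int (\<Sum>j\<in>{a..<b}. lf j) - int (\<Sum>j\<in>{a..<b}. mf j)"
    by (simp add: sum_subtractf)
  also have "... = (int (\<Sum>j<b. lf j) - int (\<Sum>j<a. lf j)) - (int (\<Sum>j<b. mf j) - int (\<Sum>j<a. mf j))"
    using sum_split_int[OF ab, of lf] sum_split_int[OF ab, of mf] by simp
  finally show ?thesis .
qed

lemma block_bound:
  fixes lf mf :: "nat \<Rightarrow> nat"
  assumes bnd: "\<And>a b. \<bar>(int (\<Sum>j<b. lf j) - int (\<Sum>j<a. lf j)) - (int (\<Sum>j<b. mf j) - int (\<Sum>j<a. mf j))\<bar> \<le> int t"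
    and fin: "\<And>j. N \<le> j \<Longrightarrow> lf j = 0"
    and blk: "lam_block lf mf B"
  shows "card B \<le> t"
proof -
  obtain I where I: "row_interval I" "\<forall>j\<in>I. \<not> lf j < mf j"
    and B: "B = {(j, c) \<in> diagram lf - diagram mf. j \<in> I}"
    using blk unfolding lam_block_def by blast
  define J where "J = I \<inter> {..<N}"
  have fin': "j < N" if "c < lf j" for j c
  proof (rule ccontr)
    assume "\<not> j < N" then have "lf j = 0" using fin by simp
    then show False using that by simp
  qed
  have BJ: "B = {(j, c) \<in> diagram lf - diagram mf. j \<in> J}"
    unfolding B J_def diagram_def using fin' by auto
  show ?thesis
  proof (cases "J = {}")
    case True then show ?thesis using BJ by simp
  next
    case False
    have finJ: "finite J" unfolding J_def by simp
    define a where "a = Min J"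
    define b where "b = Max J"
    have aJ: "a \<in> J" and bJ: "b \<in> J" using Min_in Max_in finJ False unfolding a_def b_def by auto
    have JI: "J = {a..<Suc b}"
    proof
      show "J \<subseteq> {a..<Suc b}"
      proof
        fix j assume "j \<in> J"
        then have "a \<le> j" "j \<le> b" using finJ unfolding a_def b_def by auto
        then show "j \<in> {a..<Suc b}" by simp
      qed
      show "{a..<Suc b} \<subseteq> J"
      proof
        fix j assume j: "j \<in> {a..<Suc b}"
        have "a \<in> I" "b \<in> I" using aJ bJ unfolding J_def by auto
        moreover have "a \<le> j" "j \<le> b" using j by auto
        ultimately have "j \<in> I" using I(1)[unfolded row_interval_def, rule_format, of a b j] by blast
        moreover have "j < N" using bJ j unfolding J_def by auto
        ultimately show "j \<in> J" unfolding J_def by simp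
      qed
    qed
    have "a \<le> b" using bJ finJ unfolding a_def by simp
    then have ab: "a \<le> Suc b" by simp
    have ge: "\<forall>j\<in>{a..<Suc b}. mf j \<le> lf j"
    proof
      fix j assume "j \<in> {a..<Suc b}"
      then have "j \<in> I" using JI unfolding J_def by blast
      then have "\<not> lf j < mf j" using I(2) by blast
      then show "mf j \<le> lf j" by simp
    qed
    have "int (card B) = (int (\<Sum>j<Suc b. lf j) - int (\<Sum>j<a. lf j)) - (int (\<Sum>j<Suc b. mf j) - int (\<Sum>j<a. mf j))"
      unfolding BJ JI by (rule block_card[OF ab ge])
    also have "... \<le> int t" using bnd[of "Suc b" a] by simp
    finally show ?thesis by simp
  qed
qed

lemma adj_sym: "adj_step n p q \<Longrightarrow> adj_step n q p"
  unfolding adj_step_def using left_adj_invol by metis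

lemma rt_sym: "(adj_step n)\<^sup>*\<^sup>* p q \<Longrightarrow> (adj_step n)\<^sup>*\<^sup>* q p"
proof (induction rule: rtranclp_induct)
  case base then show ?case by simp
next
  case (step b c)
  then show ?case using adj_sym converse_rtranclp_into_rtranclp by metis
qed

lemma perm_left_adj:
  assumes p: "is_perm n p" and k: "1 \<le> k" "k < n"
  shows "is_perm n (left_adj k p)"
proof -
  define sg where "sg = (\<lambda>v. if v = k then k + 1 else if v = k + 1 then k else v)"
  have la: "left_adj k p = map sg p" unfolding left_adj_def sg_def by simp
  have ss: "sg (sg v) = v" for v by (simp add: sg_def)
  have img: "sg ` {1..n} = {1..n}"
  proof
    show "sg ` {1..n} \<subseteq> {1..n}" using k by (auto simp: sg_def)
    show "{1..n} \<subseteq> sg ` {1..n}"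
    proof
      fix v assume v: "v \<in> {1..n}"
      have "sg v \<in> {1..n}" using v k by (auto simp: sg_def)
      then show "v \<in> sg ` {1..n}" using ss[of v] by (metis image_eqI)
    qed
  qed
  show ?thesis using p distinct_left_adj[of p k] img unfolding is_perm_def la by simp
qed

definition wt :: "nat list \<Rightarrow> nat" where
"wt p = (\<Sum>l<length p. l * p!l)"

lemma wt_step:
  assumes d: "distinct p" and ij: "i < j" "j < length p" and pi: "p!i = Suc k" and pj: "p!j = k"
  shows "wt (left_adj k p) + i = wt p + j"
proof -
  define q where "q = left_adj k p"
  have il: "i < length p" using ij by simp
  have e: "l * q!l + (if l = i then l else 0) = l * p!l + (if l = j then l else 0)" if l: "l < length p" for l
  proof -
    have qn: "q!l = (if p!l = k then Suc k else if p!l = Suc k then k else p!l)"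
      using l by (simp add: q_def left_adj_nth)
    consider "l = i" | "l = j" | "l \<noteq> i" "l \<noteq> j" by blast
    then show ?thesis
    proof cases
      case 1 then show ?thesis using qn pi ij by simp
    next
      case 2 then show ?thesis using qn pj ij by simp
    next
      case 3
      have "p!l \<noteq> k" using 3 pj d l ij nth_eq_iff_index_eq by metis
      moreover have "p!l \<noteq> Suc k" using 3 pi d l il nth_eq_iff_index_eq by metis
      ultimately show ?thesis using qn 3 by simp
    qed
  qed
  have "(\<Sum>l<length p. l * q!l + (if l = i then l else 0)) = (\<Sum>l<length p. l * p!l + (if l = j then l else 0))"
    using e by (rule sum.cong[OF refl]) simp
  then have "(\<Sum>l<length p. l * q!l) + (\<Sum>l<length p. (if l = i then l else 0)) = (\<Sum>l<length p. l * p!l) + (\<Sum>l<length p. (if l = j then l else 0))"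
    by (simp add: sum.distrib)
  moreover have "(\<Sum>l<length p. (if l = i then l else 0)) = i" using il by simp
  moreover have "(\<Sum>l<length p. (if l = j then l else 0)) = j" using ij by simp
  ultimately show ?thesis unfolding wt_def q_def by simp
qed

lemma wt_bound: "is_perm n p \<Longrightarrow> wt p \<le> n * (n * n)"
proof -
  assume p: "is_perm n p"
  have "l * p!l \<le> n * n" if "l \<in> {..<length p}" for l
  proof -
    have "p!l \<in> set p" using that by simp
    then have "p!l \<le> n" using p unfolding is_perm_def by auto
    moreover have "l \<le> n" using that p unfolding is_perm_def by simp
    ultimately show ?thesis by (simp add: mult_le_mono)
  qed
  then have "wt p \<le> of_nat (card {..<length p}) * (n * n)" unfolding wt_def by (rule sum_bounded_above)
  then show ?thesis using p unfolding is_perm_def by simp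
qed

lemma bad_pair:
  assumes p: "is_perm n p" and ne: "p \<noteq> [1..<Suc n]"
  shows "\<exists>k i j. 1 \<le> k \<and> k < n \<and> i < j \<and> j < n \<and> p!i = Suc k \<and> p!j = k"
proof (rule ccontr)
  assume NB: "\<not> ?thesis"
  have len: "length p = n" using p unfolding is_perm_def by simp
  have dp: "distinct p" using p unfolding is_perm_def by simp
  have vals: "i < n \<Longrightarrow> 1 \<le> p!i \<and> p!i \<le> n" for i
  proof -
    assume "i < n" then have "p!i \<in> set p" using len by simp
    then show ?thesis using p unfolding is_perm_def by auto
  qed
  have key: "\<And>i j. i < j \<Longrightarrow> j < n \<Longrightarrow> p!j < p!i \<Longrightarrow> p!i - p!j = d \<Longrightarrow> False" for d
  proof (induction d rule: less_induct)
    case (less d)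
    fix i j assume ij: "i < j" "j < n" and lt: "p!j < p!i" and dd: "p!i - p!j = d"
    define c where "c = Suc (p!j)"
    have cin: "c \<in> set p"
    proof -
      have "1 \<le> c" "c \<le> n" using vals[of i] vals[of j] ij lt unfolding c_def by auto
      then show ?thesis using p unfolding is_perm_def by auto
    qed
    then obtain l where l: "l < n" "p!l = c" using len by (auto simp: in_set_conv_nth)
    have k1: "1 \<le> p!j" using vals[of j] ij by simp
    have k2: "p!j < n" using vals[of i] ij lt by simp
    show False
    proof (cases "c = p!i")
      case True
      then have "1 \<le> p!j \<and> p!j < n \<and> i < j \<and> j < n \<and> p!i = Suc (p!j) \<and> p!j = p!j"
        using k1 k2 ij unfolding c_def by simp
      then show False using NB by blast
    next
      case False
      then have cl: "c < p!i" using lt unfolding c_def by simp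
      have "l \<noteq> j" using l unfolding c_def by auto
      show False
      proof (cases "l < j")
        case True
        then have "1 \<le> p!j \<and> p!j < n \<and> l < j \<and> j < n \<and> p!l = Suc (p!j) \<and> p!j = p!j"
          using k1 k2 l ij unfolding c_def by simp
        then show False using NB by blast
      next
        case False
        then have "j < l" using \<open>l \<noteq> j\<close> by simp
        then have "i < l" using ij by simp
        moreover have "p!i - p!l < d" using dd cl l lt unfolding c_def by simp
        ultimately show False using less.IH l cl by blast
      qed
    qed
  qed
  have "sorted_wrt (<) p"
    unfolding sorted_wrt_iff_nth_less
  proof (intro allI impI)
    fix i j assume "i < j" "j < length p"
    then have "p!i \<noteq> p!j" "\<not> p!j < p!i" using dp key len nth_eq_iff_index_eq by (metis less_trans nat_neq_iff, blast)
    then show "p!i < p!j" by simp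
  qed
  moreover have "sorted_wrt (<) [1..<Suc n]" by (rule sorted_wrt_upt)
  moreover have "set [1..<Suc n] = set p" using p unfolding is_perm_def by auto
  ultimately have "p = [1..<Suc n]" by (metis sorted_distinct_set_unique strict_sorted_iff)
  then show False using ne by simp
qed

lemma reach_id:
  assumes "is_perm n p" shows "(adj_step n)\<^sup>*\<^sup>* p [1..<Suc n]"
  using assms
proof (induction "n * (n * n) - wt p" arbitrary: p rule: less_induct)
  case less
  show ?case
  proof (cases "p = [1..<Suc n]")
    case True then show ?thesis by simp
  next
    case False
    obtain k i j where b: "1 \<le> k" "k < n" "i < j" "j < n" "p!i = Suc k" "p!j = k"
      using bad_pair[OF less.prems False] by blast
    define p' where "p' = left_adj k p"
    have P': "is_perm n p'" unfolding p'_def using perm_left_adj less.prems b by blast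
    have len: "length p = n" using less.prems unfolding is_perm_def by simp
    have "wt p' + i = wt p + j" unfolding p'_def
      by (rule wt_step) (use less.prems b len in \<open>auto simp: is_perm_def\<close>)
    then have "wt p < wt p'" using b by simp
    moreover have "wt p' \<le> n * (n * n)" by (rule wt_bound[OF P'])
    ultimately have "n * (n * n) - wt p' < n * (n * n) - wt p" by simp
    then have "(adj_step n)\<^sup>*\<^sup>* p' [1..<Suc n]" using less.hyps P' by blast
    moreover have "adj_step n p p'" unfolding adj_step_def p'_def using b by blast
    ultimately show ?thesis by (rule converse_rtranclp_into_rtranclp[rotated])
  qed
qed

lemma path_exists:
  assumes "is_perm n p" "is_perm n q" shows "\<exists>m. (adj_step n ^^ m) p q"
proof -
  have "(adj_step n)\<^sup>*\<^sup>* p [1..<Suc n]" by (rule reach_id[OF assms(1)])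
  moreover have "(adj_step n)\<^sup>*\<^sup>* [1..<Suc n] q" by (rule rt_sym[OF reach_id[OF assms(2)]])
  ultimately have "(adj_step n)\<^sup>*\<^sup>* p q" by (rule rtranclp_trans)
  then show ?thesis by (rule rtranclp_imp_relpowp)
qed

lemma path_bound:
  assumes "(adj_step n ^^ m) p q" "distinct p"
  shows "distinct q \<and> (\<forall>a b. \<bar>(int (Lam p b) - int (Lam p a)) - (int (Lam q b) - int (Lam q a))\<bar> \<le> int m)"
  using assms
proof (induction m arbitrary: q)
  case 0 then show ?case by (auto elim: relpowp_0_E)
next
  case (Suc m)
  obtain r where r: "(adj_step n ^^ m) p r" "adj_step n r q" using Suc.prems(1) by (auto elim: relpowp_Suc_E)
  note IH = Suc.IH[OF r(1) Suc.prems(2)]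
  obtain k where q: "q = left_adj k r" using r(2) unfolding adj_step_def by blast
  have dr: "distinct r" using IH by simp
  have dq: "distinct q" using q distinct_left_adj[OF dr] by simp
  have st: "(\<forall>x. Lam q x \<le> Lam r x \<and> Lam r x \<le> Lam q x + 1) \<or> (\<forall>x. Lam r x \<le> Lam q x \<and> Lam q x \<le> Lam r x + 1)"
    using step_Lam[OF dr, of k] q by simp
  have E: "\<bar>(int (Lam r b) - int (Lam q b)) - (int (Lam r a) - int (Lam q a))\<bar> \<le> 1" for a b
    using st
  proof
    assume h: "\<forall>x. Lam q x \<le> Lam r x \<and> Lam r x \<le> Lam q x + 1"
    then show ?thesis using h[rule_format, of a] h[rule_format, of b] by linarith
  next
    assume h: "\<forall>x. Lam r x \<le> Lam q x \<and> Lam q x \<le> Lam r x + 1"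
    then show ?thesis using h[rule_format, of a] h[rule_format, of b] by linarith
  qed
  have "\<bar>(int (Lam p b) - int (Lam p a)) - (int (Lam q b) - int (Lam q a))\<bar> \<le> int (Suc m)" for a b
  proof -
    have "\<bar>(int (Lam p b) - int (Lam p a)) - (int (Lam r b) - int (Lam r a))\<bar> \<le> int m" using IH by blast
    then show ?thesis using E[of b a] by linarith
  qed
  then show ?case using dq by blast
qed

lemma shape_sum: "(\<Sum>j<k. rsk_shape w j) = Lam w k"
proof -
  define P where "P = rsk_P w"
  have "(\<Sum>j<k. rsk_shape w j) = (\<Sum>j<k. if j < length P then length (P!j) else 0)"
    unfolding rsk_shape_def P_def by (simp add: Let_def)
  also have "... = (\<Sum>j\<in>{j\<in>{..<k}. j < length P}. length (P!j))"
    by (rule sum.inter_filter[symmetric], simp)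
  also have "{j\<in>{..<k}. j < length P} = {..<min k (length P)}" by auto
  also have "(\<Sum>j<min k (length P). length (P!j)) = lam P k"
  proof -
    have "lam P k = (\<Sum>j<length (take k P). length (take k P ! j))"
      unfolding lam_def by (simp add: sum_list_sum_nth atLeast0LessThan)
    also have "... = (\<Sum>j<min k (length P). length (P!j))" by (simp add: min.commute)
    finally show ?thesis by simp
  qed
  finally show ?thesis unfolding Lam_def P_def by simp
qed

lemma shape_zero: "length (rsk_P w) \<le> j \<Longrightarrow> rsk_shape w j = 0"
  unfolding rsk_shape_def by (simp add: Let_def)

theorem proposition4:
  fixes n t :: nat and pi tau :: "nat list" and B :: "(nat \<times> nat) set"
  assumes "is_perm n pi" and "is_perm n tau"
    and "perm_dist n pi tau = t"
    and "is_block (rsk_shape pi) (rsk_shape tau) B"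
  shows "card B \<le> t"
proof -
  have path: "(adj_step n ^^ t) pi tau"
    using LeastI_ex[OF path_exists[OF assms(1,2)]] assms(3) unfolding perm_dist_def by simp
  have dpi: "distinct pi" using assms(1) unfolding is_perm_def by simp
  have bnd: "\<bar>(int (Lam pi b) - int (Lam pi a)) - (int (Lam tau b) - int (Lam tau a))\<bar> \<le> int t" for a b
    using path_bound[OF path dpi] by blast
  have b1: "\<bar>(int (\<Sum>j<b. rsk_shape pi j) - int (\<Sum>j<a. rsk_shape pi j)) - (int (\<Sum>j<b. rsk_shape tau j) - int (\<Sum>j<a. rsk_shape tau j))\<bar> \<le> int t" for a b
    unfolding shape_sum using bnd .
  have b2: "\<bar>(int (\<Sum>j<b. rsk_shape tau j) - int (\<Sum>j<a. rsk_shape tau j)) - (int (\<Sum>j<b. rsk_shape pi j) - int (\<Sum>j<a. rsk_shape pi j))\<bar> \<le> int t" for a b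
    using b1[of b a] by linarith
  from assms(4) show ?thesis unfolding is_block_def
  proof
    assume lb: "lam_block (rsk_shape pi) (rsk_shape tau) B"
    show ?thesis
    proof (rule block_bound[where N="length (rsk_P pi)"])
      show "\<bar>(int (\<Sum>j<b. rsk_shape pi j) - int (\<Sum>j<a. rsk_shape pi j)) - (int (\<Sum>j<b. rsk_shape tau j) - int (\<Sum>j<a. rsk_shape tau j))\<bar> \<le> int t" for a b
        by (rule b1)
      show "rsk_shape pi j = 0" if "length (rsk_P pi) \<le> j" for j using that by (rule shape_zero)
      show "lam_block (rsk_shape pi) (rsk_shape tau) B" by (rule lb)
    qed
  next
    assume lb: "lam_block (rsk_shape tau) (rsk_shape pi) B"
    show ?thesis
    proof (rule block_bound[where N="length (rsk_P tau)"])
      show "\<bar>(int (\<Sum>j<b. rsk_shape tau j) - int (\<Sum>j<a. rsk_shape tau j)) - (int (\<Sum>j<b. rsk_shape pi j) - int (\<Sum>j<a. rsk_shape pi j))\<bar> \<le> int t" for a b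
        by (rule b2)
      show "rsk_shape tau j = 0" if "length (rsk_P tau) \<le> j" for j using that by (rule shape_zero)
      show "lam_block (rsk_shape tau) (rsk_shape pi) B" by (rule lb)
    qed
  qed
qed

end
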